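(* Let $\mathcal{A}$ be an associative unital algebra over $\mathbb{C}$ containing elements $\lambda_1,\dots,\lambda_g,\mu_1,\dots,\mu_g$ such that for all $i,j$: $[\lambda_i,\lambda_j]=0$, $[\mu_i,\mu_j]=0$, and $[\lambda_i,\mu_j]=0$ whenever $i\neq j$ (the commutator $[\lambda_i,\mu_i]$ is arbitrary, e.g. $p(\lambda_i,\mu_i)$). For each $i$ let $\mathcal{A}_i\subset\mathcal A$ denote the subalgebra generated by $\lambda_i,\mu_i$ (and possibly inverses of some of its elements), so that $\mathcal A_i$ and $\mathcal A_k$ commute elementwise for $i\neq k$. Let $R_0,R_1,\dots,R_g$ be fixed expressions in two noncommuting variables with non-dynamical (scalar) coefficients, with a fixed ordering of the two variables, and set $B_{ij}=R_j(\lambda_i,\mu_i)\in\mathcal A_i$, $V_i=R_0(\lambda_i,\mu_i)\in\mathcal{A}_i$. Assume the determinant $D$ of $B$ is invertible in $\mathcal A$ and $B$ is invertible in $\mathrm{Mat}_g(\mathcal A)$, so that $(B^{-1})_{ij}=D^{-1}\Delta_{ji}$. Define $H=(H_1,\dots,H_g)^T$ by $H=-B^{-1}V$, i.e. the solution of Baxter's equations $$\sum_{j=1}^g R_j(\lambda_i,\mu_i)H_j+R_0(\lambda_i,\mu_i)=0,\qquad i=1,\dots,g,$$ with the $H_j$ placed to the right. Then $[H_i,H_j]=0$ for all $i,j\in\{1,\dots,g\}$.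
   Context: Because entries of $B$ lying in different rows commute, the determinant $D=\sum_{\sigma\in S_g}\mathrm{sgn}(\sigma)\,B_{1\sigma(1)}\cdots B_{g\sigma(g)}$ is independent of the order of the factors, and the cofactor $\Delta_{ij}$ is $(-1)^{i+j}$ times the determinant (defined the same way) of the matrix obtained from $B$ by deleting row $i$ and column $j$. *)

theory Defs
  imports Complex_Main "HOL-Combinatorics.Permutations"
begin

text \<open>A unital associative algebra over the complex numbers is modelled as a
  ring with unit together with a unital ring homomorphism from the complex
  numbers into its centre (the structure map of scalars).\<close>

definition complex_structure_map :: "(complex \<Rightarrow> 'a::ring_1) \<Rightarrow> bool" where
  "complex_structure_map sc \<longleftrightarrow>
     (\<forall>a b. sc (a + b) = sc a + sc b) \<and>
     (\<forall>a b. sc (a * b) = sc a * sc b) \<and>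
     sc 1 = 1 \<and>
     (\<forall>a x. sc a * x = x * sc a)"

definition invertible_el :: "'a::ring_1 \<Rightarrow> bool" where
  "invertible_el x \<longleftrightarrow> (\<exists>y. x * y = 1 \<and> y * x = 1)"

definition ring_inv :: "'a::ring_1 \<Rightarrow> 'a" where
  "ring_inv x = (THE y. x * y = 1 \<and> y * x = 1)"

datatype nc_expr =
    VarL | VarM | Scal complex
  | Add nc_expr nc_expr | Mul nc_expr nc_expr | Inv nc_expr

fun nc_eval :: "(complex \<Rightarrow> 'a::ring_1) \<Rightarrow> nc_expr \<Rightarrow> 'a \<Rightarrow> 'a \<Rightarrow> 'a" where
  "nc_eval sc VarL l m = l"
| "nc_eval sc VarM l m = m"
| "nc_eval sc (Scal c) l m = sc c"
| "nc_eval sc (Add e f) l m = nc_eval sc e l m + nc_eval sc f l m"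
| "nc_eval sc (Mul e f) l m = nc_eval sc e l m * nc_eval sc f l m"
| "nc_eval sc (Inv e) l m = ring_inv (nc_eval sc e l m)"

fun nc_welldef :: "(complex \<Rightarrow> 'a::ring_1) \<Rightarrow> nc_expr \<Rightarrow> 'a \<Rightarrow> 'a \<Rightarrow> bool" where
  "nc_welldef sc VarL l m = True"
| "nc_welldef sc VarM l m = True"
| "nc_welldef sc (Scal c) l m = True"
| "nc_welldef sc (Add e f) l m = (nc_welldef sc e l m \<and> nc_welldef sc f l m)"
| "nc_welldef sc (Mul e f) l m = (nc_welldef sc e l m \<and> nc_welldef sc f l m)"
| "nc_welldef sc (Inv e) l m = (nc_welldef sc e l m \<and> invertible_el (nc_eval sc e l m))"

definition nc_det :: "nat \<Rightarrow> (nat \<Rightarrow> nat \<Rightarrow> 'a::ring_1) \<Rightarrow> 'a" where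
  "nc_det g B = (\<Sum>\<sigma>\<in>{\<sigma>. \<sigma> permutes {1..g}}.
      of_int (sign \<sigma>) * prod_list (map (\<lambda>i. B i (\<sigma> i)) [1..<g+1]))"

definition is_matrix_inverse :: "nat \<Rightarrow> (nat \<Rightarrow> nat \<Rightarrow> 'a::ring_1) \<Rightarrow> (nat \<Rightarrow> nat \<Rightarrow> 'a) \<Rightarrow> bool" where
  "is_matrix_inverse g B C \<longleftrightarrow>
     (\<forall>i\<in>{1..g}. \<forall>j\<in>{1..g}.
        (\<Sum>k=1..g. B i k * C k j) = (if i = j then 1 else 0) \<and>
        (\<Sum>k=1..g. C i k * B k j) = (if i = j then 1 else 0))"

end

theory Submission
  imports Defs
begin


lemma ring_inv_prop:
  assumes "invertible_el (y::'a::ring_1)"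
  shows "y * ring_inv y = 1 \<and> ring_inv y * y = 1"
proof -
  obtain z where z: "y * z = 1" "z * y = 1" using assms unfolding invertible_el_def by blast
  have uniq: "w = z" if "y * w = 1 \<and> w * y = 1" for w
  proof -
    have "w = w * (y * z)" using z by simp
    also have "\<dots> = (w * y) * z" by (simp add: mult.assoc)
    also have "\<dots> = z" using that by simp
    finally show ?thesis .
  qed
  have "ring_inv y = z" unfolding ring_inv_def
  proof (rule the_equality)
    show "y * z = 1 \<and> z * y = 1" using z by simp
  next
    fix w assume "y * w = 1 \<and> w * y = 1"
    then show "w = z" by (rule uniq)
  qed
  then show ?thesis using z by simp
qed

lemma comm_inv:
  assumes "invertible_el (y::'a::ring_1)" "x * y = y * x"
  shows "x * ring_inv y = ring_inv y * x"
proof -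
  let ?z = "ring_inv y"
  have z: "y * ?z = 1" "?z * y = 1" using ring_inv_prop[OF assms(1)] by auto
  have "x * ?z = (?z * y) * x * ?z" using z by simp
  also have "\<dots> = ?z * (x * y) * ?z" using assms(2) by (simp add: mult.assoc)
  also have "\<dots> = ?z * x * (y * ?z)" by (simp add: mult.assoc)
  also have "\<dots> = ?z * x" using z by simp
  finally show ?thesis .
qed

lemma comm_eval:
  assumes alg: "complex_structure_map sc"
    and "x * l = l * x" "x * m = m * x"
    and "nc_welldef sc e l m"
  shows "x * nc_eval sc e l m = nc_eval sc e l m * (x::'a::ring_1)"
  using assms(4)
proof (induction e)
  case (Scal c) then show ?case using alg unfolding complex_structure_map_def by simp
next
  case (Add e f) then show ?case by (simp add: algebra_simps)
next
  case (Mul e f)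
  then have "x * nc_eval sc e l m * nc_eval sc f l m = nc_eval sc e l m * x * nc_eval sc f l m"
    by simp
  also have "\<dots> = nc_eval sc e l m * (x * nc_eval sc f l m)" by (simp add: mult.assoc)
  also have "\<dots> = nc_eval sc e l m * (nc_eval sc f l m * x)" using Mul by simp
  finally show ?case by (simp add: mult.assoc)
next
  case (Inv e)
  then have "x * nc_eval sc e l m = nc_eval sc e l m * x" "invertible_el (nc_eval sc e l m)" by auto
  then show ?case by (simp add: comm_inv)
qed (use assms in auto)

lemma half_zero:
  fixes sc :: "complex \<Rightarrow> 'a::ring_1"
  assumes alg: "complex_structure_map sc" and "x + x = (0::'a)"
  shows "x = 0"
proof -
  have add: "sc (a + b) = sc a + sc b" and one: "sc 1 = 1" for a b
    using alg unfolding complex_structure_map_def by auto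
  have "sc (1/2) + sc (1/2) = sc 1" by (subst add[symmetric]) simp
  then have "(sc (1/2) + sc (1/2)) * x = x" using one by simp
  then have "sc (1/2) * (x + x) = x" by (simp add: algebra_simps)
  then show ?thesis using assms(2) by simp
qed

lemma comm_prod_list:
  assumes "\<forall>x\<in>set xs. x * y = y * (x::'a::monoid_mult)"
  shows "prod_list xs * y = y * prod_list xs"
  using assms
proof (induction xs)
  case (Cons a xs)
  have "prod_list (a # xs) * y = a * (prod_list xs * y)" by (simp add: mult.assoc)
  also have "\<dots> = a * (y * prod_list xs)" using Cons by simp
  also have "\<dots> = (a * y) * prod_list xs" by (simp add: mult.assoc)
  also have "\<dots> = (y * a) * prod_list xs" using Cons by simp
  finally show ?case by (simp add: mult.assoc)
qed simp

lemma prod_list_pull: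
  assumes "distinct xs" "p \<in> set xs"
    and "\<forall>i\<in>set xs. i \<noteq> p \<longrightarrow> f i * f p = f p * (f i::'a::monoid_mult)"
  shows "prod_list (map f xs) = prod_list (map f (filter (\<lambda>i. i \<noteq> p) xs)) * f p"
  using assms
proof (induction xs)
  case (Cons x xs)
  show ?case
  proof (cases "x = p")
    case True
    then have "p \<notin> set xs" using Cons.prems(1) by simp
    then have "filter (\<lambda>i. i \<noteq> p) xs = xs" by (induction xs) auto
    moreover have "prod_list (map f xs) * f p = f p * prod_list (map f xs)"
    proof (rule comm_prod_list, rule ballI)
      fix y assume "y \<in> set (map f xs)"
      then obtain i where i: "i \<in> set xs" "y = f i" by auto
      have "i \<noteq> p" using i(1) \<open>p \<notin> set xs\<close> by blast
      then show "y * f p = f p * y" using Cons.prems(3) i by simp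
    qed
    ultimately show ?thesis using True by simp
  next
    case False
    have d: "distinct xs" using Cons.prems(1) by simp
    have pin: "p \<in> set xs" using Cons.prems(2) False by simp
    have h: "\<forall>i\<in>set xs. i \<noteq> p \<longrightarrow> f i * f p = f p * f i" using Cons.prems(3) by simp
    have "prod_list (map f xs) = prod_list (map f (filter (\<lambda>i. i \<noteq> p) xs)) * f p"
      by (rule Cons.IH[OF d pin h])
    then show ?thesis using False by (simp add: mult.assoc)
  qed
qed simp

definition detf :: "nat \<Rightarrow> (nat \<Rightarrow> nat \<Rightarrow> 'a::ring_1) \<Rightarrow> (nat \<Rightarrow> nat) \<Rightarrow> 'a" where
  "detf g B \<tau> = (\<Sum>\<sigma>\<in>{\<sigma>. \<sigma> permutes {1..g}}.
      of_int (sign \<sigma>) * prod_list (map (\<lambda>i. B i (\<tau> (\<sigma> i))) [1..<g+1]))"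

lemma detf_id: "detf g B (\<lambda>x. x) = nc_det g B"
  unfolding detf_def nc_det_def by simp

lemma detf_transp:
  assumes "c1 \<in> {1..g}" "c2 \<in> {1..g}" "c1 \<noteq> c2"
  shows "detf g B (\<tau> \<circ> transpose c1 c2) = - detf g B \<tau>"
proof -
  let ?t = "transpose c1 c2"
  have tp: "?t permutes {1..g}" using assms by (simp add: permutes_swap_id)
  have "detf g B (\<tau> \<circ> ?t) = (\<Sum>\<sigma>\<in>{\<sigma>. \<sigma> permutes {1..g}}.
      of_int (sign (?t \<circ> \<sigma>)) * prod_list (map (\<lambda>i. B i (\<tau> (?t ((?t \<circ> \<sigma>) i)))) [1..<g+1]))"
    unfolding detf_def by (subst setum_permutations_compose_left[OF tp]) simp
  also have "\<dots> = (\<Sum>\<sigma>\<in>{\<sigma>. \<sigma> permutes {1..g}}.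
      - (of_int (sign \<sigma>) * prod_list (map (\<lambda>i. B i (\<tau> (\<sigma> i))) [1..<g+1])))"
  proof (rule sum.cong[OF refl])
    fix \<sigma> assume "\<sigma> \<in> {\<sigma>. \<sigma> permutes {1..g}}"
    then have "permutation \<sigma>" by (auto intro: permutes_imp_permutation)
    then have "sign (?t \<circ> \<sigma>) = - sign \<sigma>"
      using assms by (simp add: sign_compose sign_swap_id permutation_swap_id)
    then show "of_int (sign (?t \<circ> \<sigma>)) * prod_list (map (\<lambda>i. B i (\<tau> (?t ((?t \<circ> \<sigma>) i)))) [1..<g+1])
       = - (of_int (sign \<sigma>) * prod_list (map (\<lambda>i. B i (\<tau> (\<sigma> i))) [1..<g+1]))"
      by simp
  qed
  also have "\<dots> = - detf g B \<tau>" unfolding detf_def by (simp add: sum_negf)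
  finally show ?thesis .
qed

lemma detf_noninj:
  fixes sc :: "complex \<Rightarrow> 'a::ring_1"
  assumes alg: "complex_structure_map sc"
    and "c1 \<in> {1..g}" "c2 \<in> {1..g}" "c1 \<noteq> c2" "\<tau> c1 = \<tau> c2"
  shows "detf g (B::nat \<Rightarrow> nat \<Rightarrow> 'a) \<tau> = 0"
proof -
  have "\<tau> \<circ> transpose c1 c2 = \<tau>" using assms(5) by (simp add: fun_eq_iff transpose_def)
  then have "detf g B \<tau> = - detf g B \<tau>" using detf_transp[OF assms(2-4), of B \<tau>] by simp
  then have "detf g B \<tau> + detf g B \<tau> = 0" by (simp add: eq_neg_iff_add_eq_0)
  then show ?thesis using half_zero[OF alg] by blast
qed



lemma expansion:
  fixes B X :: "nat \<Rightarrow> nat \<Rightarrow> 'a::ring_1"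
  assumes comm: "\<And>i k j l. i \<in> {1..g} \<Longrightarrow> k \<in> {1..g} \<Longrightarrow> i \<noteq> k \<Longrightarrow> j \<in> {1..g} \<Longrightarrow> l \<in> {1..g}
      \<Longrightarrow> B i j * B k l = B k l * B i j"
    and N: "\<And>p q. p \<in> {1..g} \<Longrightarrow> q \<in> {1..g} \<Longrightarrow> p \<noteq> q \<Longrightarrow>
      (\<Sum>j=1..g. \<Sum>l=1..g. B q l * B p j * X j l) = 0"
    and ab: "a \<in> {1..g}" "b \<in> {1..g}" "a \<noteq> b"
  shows "(\<Sum>j=1..g. \<Sum>l=1..g.
      detf g B (\<lambda>c. if c = a then j else if c = b then l else c) * X j l) = 0"
proof -
  define I where "I = {1..g}"
  define rs where "rs = [1..<g+1]"
  have setrs: "set rs = I" unfolding rs_def I_def by auto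
  have drs: "distinct rs" unfolding rs_def by simp
  define \<tau> where "\<tau> = (\<lambda>j l c. if c = a then j else if c = b then l else (c::nat))"
  define P where "P = (\<lambda>\<sigma> j l. prod_list (map (\<lambda>i. B i (\<tau> j l (\<sigma> i))) rs))"
  define PS where "PS = {\<sigma>. \<sigma> permutes I}"
  have det_eq: "detf g B (\<tau> j l) = (\<Sum>\<sigma>\<in>PS. of_int (sign \<sigma>) * P \<sigma> j l)" for j l
    unfolding detf_def P_def PS_def I_def rs_def by simp
  have inner: "(\<Sum>j\<in>I. \<Sum>l\<in>I. P \<sigma> j l * X j l) = 0" if sp: "\<sigma> \<in> PS" for \<sigma>
  proof -
    have sp': "\<sigma> permutes I" using sp unfolding PS_def by simp
    define p where "p = inv \<sigma> a"
    define q where "q = inv \<sigma> b"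
    have ab': "a \<in> I" "b \<in> I" using ab unfolding I_def by auto
    have sig_in: "\<sigma> i \<in> I" if "i \<in> I" for i using sp' that by (simp add: permutes_in_image)
    have pI: "p \<in> I" unfolding p_def using ab' sp' by (simp add: permutes_inv permutes_in_image)
    have qI: "q \<in> I" unfolding q_def using ab' sp' by (simp add: permutes_inv permutes_in_image)
    have sp_p: "\<sigma> p = a" unfolding p_def using sp' by (simp add: permutes_inverses(1))
    have sq_q: "\<sigma> q = b" unfolding q_def using sp' by (simp add: permutes_inverses(1))
    have pq: "p \<noteq> q" using sp_p sq_q ab(3) by auto
    have sig_inj: "\<sigma> i = \<sigma> i' \<Longrightarrow> i = i'" for i i'
      using permutes_inj[OF sp'] by (simp add: inj_eq)
    define Q where "Q = prod_list (map (\<lambda>i. B i (\<sigma> i)) (filter (\<lambda>i. i \<noteq> q) (filter (\<lambda>i. i \<noteq> p) rs)))"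
    have key: "P \<sigma> j l = Q * B q l * B p j" if jl: "j \<in> I" "l \<in> I" for j l
    proof -
      define f where "f = (\<lambda>i. B i (\<tau> j l (\<sigma> i)))"
      have fI: "\<tau> j l (\<sigma> i) \<in> I" if "i \<in> I" for i
        using sig_in[OF that] jl unfolding \<tau>_def by auto
      have fcomm: "f i * f k = f k * f i" if "i \<in> I" "k \<in> I" "i \<noteq> k" for i k
        unfolding f_def using comm[of i k] that fI unfolding I_def by auto
      have s1: "prod_list (map f rs) = prod_list (map f (filter (\<lambda>i. i \<noteq> p) rs)) * f p"
        by (rule prod_list_pull) (use drs pI setrs fcomm in auto)
      have s2: "prod_list (map f (filter (\<lambda>i. i \<noteq> p) rs))
          = prod_list (map f (filter (\<lambda>i. i \<noteq> q) (filter (\<lambda>i. i \<noteq> p) rs))) * f q"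
        by (rule prod_list_pull) (use drs qI pq setrs fcomm in auto)
      have s3: "map f (filter (\<lambda>i. i \<noteq> q) (filter (\<lambda>i. i \<noteq> p) rs))
          = map (\<lambda>i. B i (\<sigma> i)) (filter (\<lambda>i. i \<noteq> q) (filter (\<lambda>i. i \<noteq> p) rs))"
      proof (rule map_cong[OF refl])
        fix i assume "i \<in> set (filter (\<lambda>i. i \<noteq> q) (filter (\<lambda>i. i \<noteq> p) rs))"
        then have "i \<noteq> p" "i \<noteq> q" by auto
        then have "\<sigma> i \<noteq> a" "\<sigma> i \<noteq> b" using sig_inj sp_p sq_q by metis+
        then show "f i = B i (\<sigma> i)" unfolding f_def \<tau>_def by simp
      qed
      have fp: "f p = B p j" unfolding f_def \<tau>_def using sp_p by simp
      have fq: "f q = B q l" unfolding f_def \<tau>_def using sq_q ab(3) by simp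
      have "P \<sigma> j l = prod_list (map f rs)" unfolding P_def f_def by simp
      also have "\<dots> = Q * B q l * B p j" unfolding Q_def by (simp only: s1 s2 s3 fp fq)
      finally show ?thesis .
    qed
    have "(\<Sum>j\<in>I. \<Sum>l\<in>I. P \<sigma> j l * X j l) = (\<Sum>j\<in>I. \<Sum>l\<in>I. Q * (B q l * B p j * X j l))"
      using key by (simp add: mult.assoc)
    also have "\<dots> = Q * (\<Sum>j\<in>I. \<Sum>l\<in>I. B q l * B p j * X j l)"
      by (simp add: sum_distrib_left)
    also have "\<dots> = 0" using N[of p q] pI qI pq unfolding I_def by simp
    finally show ?thesis .
  qed
  have "(\<Sum>j\<in>I. \<Sum>l\<in>I. detf g B (\<tau> j l) * X j l)
      = (\<Sum>j\<in>I. \<Sum>l\<in>I. \<Sum>\<sigma>\<in>PS. of_int (sign \<sigma>) * (P \<sigma> j l * X j l))"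
    by (simp add: det_eq sum_distrib_right mult.assoc)
  also have "\<dots> = (\<Sum>j\<in>I. \<Sum>\<sigma>\<in>PS. \<Sum>l\<in>I. of_int (sign \<sigma>) * (P \<sigma> j l * X j l))"
    by (rule sum.cong[OF refl]) (rule sum.swap)
  also have "\<dots> = (\<Sum>\<sigma>\<in>PS. \<Sum>j\<in>I. \<Sum>l\<in>I. of_int (sign \<sigma>) * (P \<sigma> j l * X j l))"
    by (rule sum.swap)
  also have "\<dots> = (\<Sum>\<sigma>\<in>PS. of_int (sign \<sigma>) * (\<Sum>j\<in>I. \<Sum>l\<in>I. P \<sigma> j l * X j l))"
    by (simp add: sum_distrib_left)
  also have "\<dots> = 0" using inner by simp
  finally show ?thesis unfolding \<tau>_def I_def .
qed



theorem theorem2: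
  fixes sc :: "complex \<Rightarrow> 'a::ring_1"
    and g :: nat
    and lam mu :: "nat \<Rightarrow> 'a"
    and R :: "nat \<Rightarrow> nc_expr"
    and C :: "nat \<Rightarrow> nat \<Rightarrow> 'a"
  assumes alg: "complex_structure_map sc"
    and ll: "\<And>i j. i \<in> {1..g} \<Longrightarrow> j \<in> {1..g} \<Longrightarrow> lam i * lam j = lam j * lam i"
    and mm: "\<And>i j. i \<in> {1..g} \<Longrightarrow> j \<in> {1..g} \<Longrightarrow> mu i * mu j = mu j * mu i"
    and lm: "\<And>i j. i \<in> {1..g} \<Longrightarrow> j \<in> {1..g} \<Longrightarrow> i \<noteq> j \<Longrightarrow> lam i * mu j = mu j * lam i"
    and wd: "\<And>i j. i \<in> {1..g} \<Longrightarrow> j \<in> {0..g} \<Longrightarrow> nc_welldef sc (R j) (lam i) (mu i)"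
    and D_inv: "invertible_el (nc_det g (\<lambda>i j. nc_eval sc (R j) (lam i) (mu i)))"
    and C_inv: "is_matrix_inverse g (\<lambda>i j. nc_eval sc (R j) (lam i) (mu i)) C"
  shows "\<forall>i\<in>{1..g}. \<forall>j\<in>{1..g}.
           (let H = (\<lambda>k. - (\<Sum>l=1..g. C k l * nc_eval sc (R 0) (lam l) (mu l)))
            in H i * H j = H j * H i)"
proof -
  define I where "I = {1..g}"
  define E where "E = (\<lambda>i j. nc_eval sc (R j) (lam i) (mu i))"
  define H where "H = (\<lambda>k. - (\<Sum>l\<in>I. C k l * E l 0))"
  define X where "X = (\<lambda>j l. H j * H l - H l * H j)"
  define D where "D = nc_det g E"
  have commE: "E i j * E k l = E k l * E i j"
    if "i \<in> I" "k \<in> I" "i \<noteq> k" "j \<in> {0..g}" "l \<in> {0..g}" for i j k l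
  proof -
    have c1: "lam k * E i j = E i j * lam k" unfolding E_def
      by (rule comm_eval[OF alg]) (use that ll lm wd in \<open>auto simp: I_def\<close>)
    have c2: "mu k * E i j = E i j * mu k" unfolding E_def
      by (rule comm_eval[OF alg]) (use that mm lm wd in \<open>auto simp: I_def\<close>)
    show ?thesis unfolding E_def
      by (rule comm_eval[OF alg]) (use that c1 c2 wd in \<open>auto simp: I_def E_def\<close>)
  qed
  have BC: "(\<Sum>k\<in>I. E i k * C k j) = (if i = j then 1 else 0)" if "i \<in> I" "j \<in> I" for i j
    using C_inv that unfolding is_matrix_inverse_def E_def I_def by auto
  have F2: "(\<Sum>j\<in>I. E i j * H j) = - E i 0" if iI: "i \<in> I" for i
  proof -
    have "(\<Sum>j\<in>I. E i j * H j) = - (\<Sum>j\<in>I. \<Sum>l\<in>I. E i j * C j l * E l 0)"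
      unfolding H_def by (simp add: sum_distrib_left sum_negf mult.assoc)
    also have "\<dots> = - (\<Sum>l\<in>I. \<Sum>j\<in>I. E i j * C j l * E l 0)"
      by (subst sum.swap) simp
    also have "\<dots> = - (\<Sum>l\<in>I. (\<Sum>j\<in>I. E i j * C j l) * E l 0)"
      by (simp add: sum_distrib_right)
    also have "\<dots> = - (\<Sum>l\<in>I. (if i = l then 1 else 0) * E l 0)"
      using BC iI by simp
    also have "\<dots> = - (\<Sum>l\<in>I. if i = l then E l 0 else 0)"
      by (intro arg_cong[where f=uminus] sum.cong) auto
    also have "\<dots> = - E i 0" using iI unfolding I_def by simp
    finally show ?thesis .
  qed
  have F3: "(\<Sum>j\<in>I. \<Sum>l\<in>I. E k l * E i j * X j l) = 0"
    if iI: "i \<in> I" and kI: "k \<in> I" and ik: "i \<noteq> k" for i k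
  proof -
    have I0: "I \<subseteq> {0..g}" unfolding I_def by auto
    have A1: "(\<Sum>j\<in>I. \<Sum>l\<in>I. E k l * E i j * H j * H l) = E i 0 * E k 0"
    proof -
      have "(\<Sum>j\<in>I. \<Sum>l\<in>I. E k l * E i j * H j * H l)
          = (\<Sum>l\<in>I. \<Sum>j\<in>I. E k l * (E i j * H j) * H l)"
        by (subst sum.swap) (simp add: mult.assoc)
      also have "\<dots> = (\<Sum>l\<in>I. E k l * (\<Sum>j\<in>I. E i j * H j) * H l)"
        by (simp add: sum_distrib_left sum_distrib_right)
      also have "\<dots> = (\<Sum>l\<in>I. E k l * (- E i 0) * H l)" using F2[OF iI] by simp
      also have "\<dots> = (\<Sum>l\<in>I. (- E i 0) * (E k l * H l))"
      proof (rule sum.cong[OF refl])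
        fix l assume "l \<in> I"
        then have "E i 0 * E k l = E k l * E i 0" using commE[OF iI kI ik, of 0 l] I0 by auto
        then show "E k l * (- E i 0) * H l = (- E i 0) * (E k l * H l)"
          by (simp add: mult.assoc[symmetric])
      qed
      also have "\<dots> = (- E i 0) * (\<Sum>l\<in>I. E k l * H l)" by (simp add: sum_distrib_left)
      also have "\<dots> = E i 0 * E k 0" using F2[OF kI] by simp
      finally show ?thesis .
    qed
    have A2: "(\<Sum>j\<in>I. \<Sum>l\<in>I. E k l * E i j * H l * H j) = E k 0 * E i 0"
    proof -
      have "(\<Sum>j\<in>I. \<Sum>l\<in>I. E k l * E i j * H l * H j)
          = (\<Sum>j\<in>I. \<Sum>l\<in>I. E i j * (E k l * H l) * H j)"
      proof (intro sum.cong refl)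
        fix j l assume "j \<in> I" "l \<in> I"
        then have "j \<in> {0..g}" "l \<in> {0..g}" using I0 by auto
        then have "E i j * E k l = E k l * E i j" using commE[OF iI kI ik] by blast
        then show "E k l * E i j * H l * H j = E i j * (E k l * H l) * H j"
          by (simp add: mult.assoc[symmetric])
      qed
      also have "\<dots> = (\<Sum>j\<in>I. E i j * (\<Sum>l\<in>I. E k l * H l) * H j)"
        by (simp add: sum_distrib_left sum_distrib_right)
      also have "\<dots> = (\<Sum>j\<in>I. E i j * (- E k 0) * H j)" using F2[OF kI] by simp
      also have "\<dots> = (\<Sum>j\<in>I. (- E k 0) * (E i j * H j))"
      proof (rule sum.cong[OF refl])
        fix j assume "j \<in> I"
        then have "E k 0 * E i j = E i j * E k 0" using commE[OF kI iI, of 0 j] ik I0 by auto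
        then show "E i j * (- E k 0) * H j = (- E k 0) * (E i j * H j)"
          by (simp add: mult.assoc[symmetric])
      qed
      also have "\<dots> = (- E k 0) * (\<Sum>j\<in>I. E i j * H j)" by (simp add: sum_distrib_left)
      also have "\<dots> = E k 0 * E i 0" using F2[OF iI] by simp
      finally show ?thesis .
    qed
    have V: "E i 0 * E k 0 = E k 0 * E i 0" using commE[OF iI kI ik, of 0 0] by simp
    have "(\<Sum>j\<in>I. \<Sum>l\<in>I. E k l * E i j * X j l)
       = (\<Sum>j\<in>I. \<Sum>l\<in>I. E k l * E i j * H j * H l) - (\<Sum>j\<in>I. \<Sum>l\<in>I. E k l * E i j * H l * H j)"
      unfolding X_def by (simp add: right_diff_distrib sum_subtractf mult.assoc)
    then show ?thesis using A1 A2 V by simp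
  qed
  have main: "H a * H b = H b * H a" if aI: "a \<in> I" and bI: "b \<in> I" for a b
  proof (cases "a = b")
    case True then show ?thesis by simp
  next
    case False
    have I1: "I \<subseteq> {0..g}" unfolding I_def by auto
    have exp: "(\<Sum>j=1..g. \<Sum>l=1..g.
        detf g E (\<lambda>c. if c = a then j else if c = b then l else c) * X j l) = 0"
    proof (rule expansion)
      show "E i j * E k l = E k l * E i j"
        if "i \<in> {1..g}" "k \<in> {1..g}" "i \<noteq> k" "j \<in> {1..g}" "l \<in> {1..g}" for i k j l
        using commE[of i k j l] that unfolding I_def by auto
      show "(\<Sum>j=1..g. \<Sum>l=1..g. E q l * E p j * X j l) = 0"
        if "p \<in> {1..g}" "q \<in> {1..g}" "p \<noteq> q" for p q
        using F3[of p q] that unfolding I_def by auto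
    qed (use aI bI False in \<open>auto simp: I_def\<close>)
    have trm: "detf g E (\<lambda>c. if c = a then j else if c = b then l else c) * X j l
        = (if j = a then (if l = b then D * X a b else 0) else 0)
          + (if j = b then (if l = a then - D * X b a else 0) else 0)"
      if jI: "j \<in> I" and lI: "l \<in> I" for j l
    proof -
      let ?t = "(\<lambda>c. if c = a then j else if c = b then l else c)"
      have a1: "a \<in> {1..g}" "b \<in> {1..g}" using aI bI unfolding I_def by auto
      have j1: "j \<in> {1..g}" "l \<in> {1..g}" using jI lI unfolding I_def by auto
      show ?thesis
      proof (cases "j = a \<and> l = b")
        case True
        then have "?t = (\<lambda>x. x)" by auto
        then show ?thesis using True False detf_id[of g E] unfolding D_def by simp
      next
        case nab: False
        show ?thesis
        proof (cases "j = b \<and> l = a")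
          case True
          then have "?t = (\<lambda>x. x) \<circ> transpose a b" by (auto simp: fun_eq_iff transpose_def)
          then have "detf g E ?t = - D"
            using detf_transp[OF a1 False, of E "\<lambda>x. x"] detf_id[of g E] unfolding D_def by simp
          then show ?thesis using True False by simp
        next
          case nba: False
          have "detf g E ?t = 0"
          proof (cases "j = l")
            case True
            then show ?thesis using detf_noninj[OF alg a1 False, of ?t E] by simp
          next
            case jl: False
            show ?thesis
            proof (cases "j \<in> {a, b}")
              case True
              then have "l \<notin> {a, b}" using nab nba jl by auto
              then have bl: "b \<noteq> l" and la: "l \<noteq> a" by auto
              have "?t b = ?t l" using bl la \<open>a \<noteq> b\<close> by simp
              then show ?thesis using detf_noninj[OF alg a1(2) j1(2) bl, of ?t E] by simp
            next
              case jn: False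
              then have bl: "a \<noteq> j" and la: "j \<noteq> b" by auto
              have "?t a = ?t j" using bl la \<open>a \<noteq> b\<close> by simp
              then show ?thesis using detf_noninj[OF alg a1(1) j1(1) bl, of ?t E] by simp
            qed
          qed
          then show ?thesis using nab nba by auto
        qed
      qed
    qed
    have "0 = (\<Sum>j\<in>I. \<Sum>l\<in>I. detf g E (\<lambda>c. if c = a then j else if c = b then l else c) * X j l)"
      using exp unfolding I_def by simp
    also have "\<dots> = (\<Sum>j\<in>I. \<Sum>l\<in>I. (if j = a then (if l = b then D * X a b else 0) else 0)
          + (if j = b then (if l = a then - D * X b a else 0) else 0))"
      using trm by simp
    also have "\<dots> = (\<Sum>j\<in>I. (if j = a then D * X a b else 0) + (if j = b then - D * X b a else 0))"
      by (rule sum.cong[OF refl]) (use aI bI in \<open>auto simp: sum.distrib I_def\<close>)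
    also have "\<dots> = D * X a b + (- D * X b a)"
      using aI bI unfolding I_def by (simp add: sum.distrib)
    also have "\<dots> = D * X a b + D * X a b" unfolding X_def by (simp add: algebra_simps)
    finally have "D * X a b + D * X a b = 0" by simp
    then have DX: "D * X a b = 0" using half_zero[OF alg] by blast
    obtain D' where "D' * D = 1" using D_inv unfolding invertible_el_def D_def E_def by blast
    then have "X a b = D' * (D * X a b)" by (simp add: mult.assoc[symmetric])
    then have "X a b = 0" using DX by simp
    then show ?thesis unfolding X_def by simp
  qed
  show ?thesis using main unfolding H_def E_def I_def Let_def by blast
qed

end
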